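(* Let $G$ be a connected graph with $n\ge 12$ vertices and $n+k$ edges, where $1\le k\le 10$. If the minimum degree satisfies $\delta(G)\ge 2$, then $R(G)>\sqrt{n-1}+\frac{2(k+1)}{n\sqrt{n-1}}$.
   Context: All graphs are finite and simple. For a vertex $u$, $d(u)$ is its degree. The Randić index is $R(G)=\sum_{\{u,v\}\in E(G)} \frac{1}{\sqrt{d(u)d(v)}}$. *)

theory Defs
  imports Complex_Main
begin

definition simple_graph :: "'a set \<Rightarrow> 'a set set \<Rightarrow> bool" where
  "simple_graph V E \<longleftrightarrow> finite V \<and> (\<forall>e\<in>E. e \<subseteq> V \<and> card e = 2)"

definition degree :: "'a set set \<Rightarrow> 'a \<Rightarrow> nat" where
  "degree E u = card {e \<in> E. u \<in> e}"

definition adj :: "'a set set \<Rightarrow> 'a \<Rightarrow> 'a \<Rightarrow> bool" where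
  "adj E u v \<longleftrightarrow> {u, v} \<in> E"

definition connected_graph :: "'a set \<Rightarrow> 'a set set \<Rightarrow> bool" where
  "connected_graph V E \<longleftrightarrow> V \<noteq> {} \<and> (\<forall>u\<in>V. \<forall>v\<in>V. (adj E)\<^sup>*\<^sup>* u v)"

definition randic :: "'a set set \<Rightarrow> real" where
  "randic E = (\<Sum>e\<in>E. 1 / sqrt (\<Prod>u\<in>e. real (degree E u)))"

end

theory Submission imports Defs begin
lemma edge_ineq:
  fixes a b M :: real
  assumes "2 \<le> a" "2 \<le> b" "a \<le> M" "b \<le> M"
  shows "sqrt (2*M) / (M+2) * (1/a + 1/b) \<le> 1 / sqrt (a*b)"
proof -
  have key: "2*M*(a+b)^2 \<le> a*b*(M+2)^2"
  proof -
    have "0 \<le> (M*b - 2*a)*(M*a - 2*b)"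
    proof (intro mult_nonneg_nonneg)
      have "M*2 \<le> M*b" using assms by (intro mult_left_mono) auto
      thus "0 \<le> M*b - 2*a" using assms by linarith
      have "M*2 \<le> M*a" using assms by (intro mult_left_mono) auto
      thus "0 \<le> M*a - 2*b" using assms by linarith
    qed
    thus ?thesis by (simp add: power2_eq_square algebra_simps)
  qed
  have pos: "a > 0" "b > 0" "M + 2 > 0" using assms by auto
  have "sqrt (2*M) * (a+b) \<le> sqrt (a*b) * (M+2)"
  proof -
    have "sqrt (2*M*(a+b)^2) \<le> sqrt (a*b*(M+2)^2)" using key by simp
    thus ?thesis using pos by (simp add: real_sqrt_mult)
  qed
  hence "sqrt (2*M) * (a+b) / ((M+2) * (a*b)) \<le> sqrt (a*b) * (M+2) / ((M+2) * (a*b))"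
    using pos by (intro divide_right_mono) auto
  moreover have "sqrt (a*b) * (M+2) / ((M+2) * (a*b)) = 1 / sqrt (a*b)"
  proof -
    have "sqrt (a*b) * sqrt (a*b) = a*b" using pos by simp
    moreover have gen: "\<And>q x y::real. q>0 \<Longrightarrow> q*q = x \<Longrightarrow> y \<noteq> 0 \<Longrightarrow> q*y/(y*x) = 1/q"
      by (auto simp add: field_simps)
    ultimately show ?thesis using pos by (intro gen) auto
  qed
  moreover have "sqrt (2*M) / (M+2) * (1/a + 1/b) = sqrt (2*M) * (a+b) / ((M+2) * (a*b))"
    using pos by (simp add: field_simps)
  ultimately show ?thesis by simp
qed
lemma numeric:
  fixes x :: real
  assumes "x \<ge> 12"
  shows "(x*(x-1)+22)*(x+1) < 1.4 * x^2 * (x-1)"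
proof -
  have "x*(0.4*x-1.4) \<ge> 12*3.4" using assms by (intro mult_mono) auto
  hence "x*(0.4*x-1.4) - 21 \<ge> 19.8" by simp
  hence "x*(x*(0.4*x-1.4) - 21) \<ge> 12*19.8" using assms by (intro mult_mono) auto
  thus ?thesis by (simp add: power2_eq_square algebra_simps)
qed

lemma sqrt2_gt: "1.4 < sqrt (2::real)"
  by (rule real_less_rsqrt) (simp add: power2_eq_square)

theorem lemma2p7:
  fixes V :: "'a set" and E :: "'a set set" and n k :: nat
  assumes "simple_graph V E"
    and "connected_graph V E"
    and "card V = n" and "n \<ge> 12"
    and "card E = n + k" and "1 \<le> k" and "k \<le> 10"
    and "\<forall>u\<in>V. degree E u \<ge> 2"
  shows "randic E > sqrt (real n - 1) + 2 * (real k + 1) / (real n * sqrt (real n - 1))"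
proof -
  have finV: "finite V" and Esub: "\<And>e. e \<in> E \<Longrightarrow> e \<subseteq> V \<and> card e = 2"
    using assms(1) unfolding simple_graph_def by auto
  have finE: "finite E"
    using Esub finV by (meson PowI finite_Pow_iff rev_finite_subset subsetI)
  define d where "d u = real (degree E u)" for u
  have degle: "degree E u \<le> n - 1" if "u \<in> V" for u
  proof -
    have "{e \<in> E. u \<in> e} \<subseteq> (\<lambda>w. {u,w}) ` (V - {u})"
    proof
      fix e assume "e \<in> {e \<in> E. u \<in> e}"
      then have "e \<in> E" "u \<in> e" by auto
      then obtain a b where ab: "a \<noteq> b" "e = {a,b}" using Esub by (meson card_2_iff)
      then obtain w where "e = {u,w}" "w \<noteq> u" using \<open>u \<in> e\<close> by auto
      moreover have "w \<in> V" using Esub \<open>e \<in> E\<close> \<open>e = {u,w}\<close> by auto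
      ultimately show "e \<in> (\<lambda>w. {u,w}) ` (V - {u})" by auto
    qed
    hence "card {e \<in> E. u \<in> e} \<le> card ((\<lambda>w. {u,w}) ` (V - {u}))"
      using finV by (intro card_mono) auto
    also have "\<dots> \<le> card (V - {u})" using finV by (intro card_image_le) auto
    also have "\<dots> = n - 1" using that assms(3) finV by simp
    finally show ?thesis unfolding degree_def .
  qed
  have dcount: "(\<Sum>e\<in>E. \<Sum>u\<in>e. 1 / d u) = real n"
  proof -
    have "(\<Sum>e\<in>E. \<Sum>u\<in>e. 1 / d u) = (\<Sum>e\<in>E. \<Sum>u\<in>V. if u \<in> e then 1 / d u else 0)"
    proof (rule sum.cong[OF refl])
      fix e assume "e \<in> E"
      hence "e \<subseteq> V" using Esub by auto
      hence "e = {u \<in> V. u \<in> e}" by auto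
      hence "(\<Sum>u\<in>e. 1 / d u) = (\<Sum>u\<in>{u \<in> V. u \<in> e}. 1 / d u)" by simp
      also have "\<dots> = (\<Sum>u\<in>V. if u \<in> e then 1 / d u else 0)"
        using finV by (simp add: sum.inter_filter)
      finally show "(\<Sum>u\<in>e. 1 / d u) = (\<Sum>u\<in>V. if u \<in> e then 1 / d u else 0)" .
    qed
    also have "\<dots> = (\<Sum>u\<in>V. \<Sum>e\<in>E. if u \<in> e then 1 / d u else 0)"
      by (rule sum.swap)
    also have "\<dots> = (\<Sum>u\<in>V. 1)"
    proof (rule sum.cong[OF refl])
      fix u assume "u \<in> V"
      have "(\<Sum>e\<in>E. if u \<in> e then 1 / d u else 0) = (\<Sum>e\<in>{e \<in> E. u \<in> e}. 1 / d u)"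
        by (rule sum.inter_filter[symmetric, OF finE])
      also have "\<dots> = d u * (1 / d u)" unfolding d_def degree_def by simp
      also have "\<dots> = 1" using assms(8) \<open>u \<in> V\<close> unfolding d_def by force
      finally show "(\<Sum>e\<in>E. if u \<in> e then 1 / d u else 0) = 1" .
    qed
    also have "\<dots> = real n" using assms(3) by simp
    finally show ?thesis .
  qed
  define M :: real where "M = real n - 1"
  define c where "c = sqrt (2*M) / (M+2)"
  have edge: "c * (\<Sum>u\<in>e. 1 / d u) \<le> 1 / sqrt (\<Prod>u\<in>e. real (degree E u))" if eE: "e \<in> E" for e
  proof -
    obtain a b where ab: "a \<noteq> b" "e = {a,b}" using Esub[OF eE] by (meson card_2_iff)
    have abV: "a \<in> V" "b \<in> V" using Esub[OF eE] ab by auto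
    have "2 \<le> d a" "2 \<le> d b" using assms(8) abV unfolding d_def by auto
    moreover have "d w \<le> M" if "w \<in> V" for w
    proof -
      have "real (degree E w) \<le> real (n - 1)" using degle[OF that] by simp
      also have "\<dots> = M" using assms(4) unfolding M_def by (simp add: of_nat_diff)
      finally show ?thesis unfolding d_def .
    qed
    hence "d a \<le> M" "d b \<le> M" using abV by auto
    ultimately have "c * (1 / d a + 1 / d b) \<le> 1 / sqrt (d a * d b)"
      unfolding c_def by (rule edge_ineq)
    thus ?thesis using ab unfolding d_def by simp
  qed
  have "c * real n = (\<Sum>e\<in>E. c * (\<Sum>u\<in>e. 1 / d u))"
    by (simp add: dcount sum_distrib_left[symmetric])
  also have "\<dots> \<le> randic E" unfolding randic_def
    by (rule sum_mono) (rule edge)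
  finally have Rge: "c * real n \<le> randic E" .
  define x where "x = real n"
  have x12: "x \<ge> 12" using assms(4) unfolding x_def by simp
  define s where "s = sqrt (x - 1)"
  have s2: "s * s = x - 1" and spos: "s > 0" using x12 unfolding s_def by auto
  have "sqrt (2*M) = sqrt 2 * s" unfolding M_def s_def x_def by (metis real_sqrt_mult)
  moreover have "M + 2 = x + 1" unfolding M_def x_def by simp
  ultimately have cx: "c * real n = sqrt 2 * s * x / (x + 1)"
    unfolding c_def x_def by simp
  have "2 * (real k + 1) \<le> 22" using assms(7) by simp
  hence t1: "2 * (real k + 1) / (x * s) \<le> 22 / (x * s)"
    using x12 spos by (intro divide_right_mono) auto
  have "s + 22 / (x * s) < sqrt 2 * s * x / (x + 1)"
  proof -
    have num: "(x*(x-1)+22)*(x+1) < 1.4 * x^2 * (x-1)" using numeric[OF x12] .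
    have "1.4 * x^2 * (x-1) \<le> sqrt 2 * x^2 * (x-1)"
      using sqrt2_gt x12 by (intro mult_right_mono) auto
    hence A: "(x*(s*s)+22)*(x+1) < sqrt 2 * x^2 * (s*s)" using num s2 by simp
    have pos: "x * s > 0" "x + 1 > 0" using x12 spos by auto
    have "s + 22 / (x * s) = (x*(s*s)+22) / (x*s)"
      using spos x12 by (simp add: add_divide_distrib)
    also have "\<dots> < sqrt 2 * x^2 * (s*s) / ((x+1)*(x*s))"
      using A pos spos x12 by (simp add: divide_simps mult.commute mult.left_commute)
    also have "\<dots> = (sqrt 2 * s * x) * (x*s) / ((x+1)*(x*s))"
      by (simp add: power2_eq_square algebra_simps)
    also have "\<dots> = sqrt 2 * s * x / (x + 1)" using pos by simp
    finally show ?thesis .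
  qed
  thus ?thesis using Rge cx t1 unfolding x_def s_def by linarith
qed
end
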